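(* Let $\mathbb{F}\in\{\mathbb{R},\mathbb{C}\}$, let $A_1,A_2,\ldots$ be a sequence of matrices in $\mathbb{F}^{n\times n}$, and let $\mu$ be a matrix norm on $\mathbb{F}^{n\times n}$. Suppose that $\sum_{i=1}^\infty(\max(\mu(A_i),1)-1)$ converges. Then all general products from $A_1,A_2,\ldots$ are bounded: for every permutation $\sigma$ of the positive integers, every integer $p\ge 0$, and every sequence $(C_{p,r})_{r\ge1}$ of general products as defined below, there is a constant $M$ with $\mu(C_{p,r})\le M$ for all $r\ge 1$.
   Context: A matrix norm is a submultiplicative norm on $\mathbb{F}^{n\times n}$. General products: given a permutation $\sigma$ of the positive integers, set $B_i=A_{\sigma(i)}$; for an integer $p\ge0$ and each $r\ge1$, $C_{p,r}$ is a product of the matrices $B_{p+1},\ldots,B_{p+r}$, each used exactly once, taken in some order (the order may be chosen arbitrarily and independently for each $r$). *)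

theory Defs
  imports "HOL-Analysis.Analysis"
begin

text \<open>Square n x n matrices over a field F are rendered as 'a^'n^'n with 'n a finite
  index type (n = CARD('n)). A matrix norm is a submultiplicative norm on the matrix space.\<close>

definition matrix_norm :: "('a::real_normed_field^'n^'n \<Rightarrow> real) \<Rightarrow> bool" where
  "matrix_norm \<mu> \<longleftrightarrow>
     (\<forall>A. 0 \<le> \<mu> A) \<and>
     (\<forall>A. \<mu> A = 0 \<longleftrightarrow> A = 0) \<and>
     (\<forall>c A. \<mu> (\<chi> i j. c * A $ i $ j) = norm c * \<mu> A) \<and>
     (\<forall>A B. \<mu> (A + B) \<le> \<mu> A + \<mu> B) \<and>
     (\<forall>A B. \<mu> (A ** B) \<le> \<mu> A * \<mu> B)"

definition ordered_prod :: "(nat \<Rightarrow> 'a::semiring_1^'n^'n) \<Rightarrow> nat list \<Rightarrow> 'a^'n^'n" where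
  "ordered_prod B ks = foldr (\<lambda>k M. B k ** M) ks (mat 1)"

definition is_general_product ::
    "(nat \<Rightarrow> 'a::semiring_1^'n^'n) \<Rightarrow> nat \<Rightarrow> nat \<Rightarrow> 'a^'n^'n \<Rightarrow> bool" where
  "is_general_product B p r C \<longleftrightarrow>
     (\<exists>ks. distinct ks \<and> set ks = {p+1..p+r} \<and> C = ordered_prod B ks)"

text \<open>All general products from A 1, A 2, ... are bounded (A 0 is unused; indices start at 1).\<close>
definition general_products_bounded ::
    "('a::semiring_1^'n^'n \<Rightarrow> real) \<Rightarrow> (nat \<Rightarrow> 'a^'n^'n) \<Rightarrow> bool" where
  "general_products_bounded \<mu> A \<longleftrightarrow>
     (\<forall>\<sigma>::nat \<Rightarrow> nat. bij_betw \<sigma> {1..} {1..} \<longrightarrow>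
       (\<forall>(p::nat) (C::nat \<Rightarrow> 'a^'n^'n).
          (\<forall>r\<ge>1. is_general_product (\<lambda>i. A (\<sigma> i)) p r (C r)) \<longrightarrow>
          (\<exists>M. \<forall>r\<ge>1. \<mu> (C r) \<le> M)))"

end

theory Submission
  imports Defs
begin

lemma op_bound:
  fixes \<mu> :: "'a::real_normed_field^'n^'n \<Rightarrow> real"
  assumes mn: "matrix_norm \<mu>"
  shows "\<mu> (ordered_prod B ks) \<le> \<mu> (mat 1) * (\<Prod>k\<leftarrow>ks. max (\<mu> (B k)) 1)"
proof (induction ks)
  case Nil
  then show ?case by (simp add: ordered_prod_def)
next
  case (Cons k ks)
  have nn: "\<And>X. 0 \<le> \<mu> X" using mn by (simp add: matrix_norm_def)
  have sub: "\<mu> (B k ** ordered_prod B ks) \<le> \<mu> (B k) * \<mu> (ordered_prod B ks)"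
    using mn by (simp add: matrix_norm_def)
  have eq: "ordered_prod B (k # ks) = B k ** ordered_prod B ks"
    by (simp add: ordered_prod_def)
  have "\<mu> (B k) * \<mu> (ordered_prod B ks) \<le> max (\<mu> (B k)) 1 * \<mu> (ordered_prod B ks)"
    by (rule mult_right_mono) (auto simp: nn)
  also have "\<dots> \<le> max (\<mu> (B k)) 1 * (\<mu> (mat 1) * (\<Prod>k\<leftarrow>ks. max (\<mu> (B k)) 1))"
    by (rule mult_left_mono[OF Cons.IH]) auto
  finally show ?case using sub eq by (simp add: algebra_simps)
qed

lemma prod_exp_bound:
  fixes m :: "nat \<Rightarrow> real"
  assumes "finite S" "\<And>i. 1 \<le> m i"
  shows "(\<Prod>i\<in>S. m i) \<le> exp (\<Sum>i\<in>S. m i - 1)"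
  using assms
proof (induction S rule: finite_induct)
  case empty then show ?case by simp
next
  case (insert x F)
  have "m x \<le> exp (m x - 1)" using exp_ge_add_one_self[of "m x - 1"] by simp
  moreover have "(\<Prod>i\<in>F. m i) \<le> exp (\<Sum>i\<in>F. m i - 1)" using insert by simp
  moreover have "0 \<le> (\<Prod>i\<in>F. m i)"
  proof (rule prod_nonneg)
    fix i show "0 \<le> m i" using insert(4)[of i] by linarith
  qed
  moreover have "0 \<le> m x" using insert(4)[of x] by simp
  ultimately have "m x * (\<Prod>i\<in>F. m i) \<le> exp (m x - 1) * exp (\<Sum>i\<in>F. m i - 1)"
    by (simp add: mult_mono)
  then show ?case using insert by (simp add: exp_add)
qed

lemma sum_le_suminf_shift:
  fixes f :: "nat \<Rightarrow> real"
  assumes "summable (\<lambda>i. f (Suc i))" "\<And>i. 0 \<le> f i" "finite T" "T \<subseteq> {1..}"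
  shows "sum f T \<le> (\<Sum>i. f (Suc i))"
proof -
  define N where "N = Max T"
  have N: "T \<subseteq> {1..N}" using assms(3,4) Max_ge unfolding N_def by fastforce
  have "sum f T \<le> sum f {1..N}" by (rule sum_mono2) (use N assms in auto)
  also have "sum f {1..N} = (\<Sum>i<N. f (Suc i))"
    using sum.atLeast1_atMost_eq[of f N] by simp
  also have "\<dots> \<le> (\<Sum>i. f (Suc i))" by (rule sum_le_suminf) (use assms in simp_all)
  finally show ?thesis .
qed

lemma general:
  fixes \<mu> :: "'a::real_normed_field^'n^'n \<Rightarrow> real"
  assumes mn: "matrix_norm \<mu>" and sm: "summable (\<lambda>i. max (\<mu> (A (Suc i))) 1 - 1)"
  shows "general_products_bounded \<mu> A"
  unfolding general_products_bounded_def
proof (intro allI impI)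
  fix \<sigma> :: "nat \<Rightarrow> nat" and p :: nat and C :: "nat \<Rightarrow> 'a^'n^'n"
  assume bij: "bij_betw \<sigma> {1..} {1..}"
    and gp: "\<forall>r\<ge>1. is_general_product (\<lambda>i. A (\<sigma> i)) p r (C r)"
  define m where "m = (\<lambda>j. max (\<mu> (A j)) 1)"
  define S where "S = (\<Sum>i. m (Suc i) - 1)"
  have nn: "\<And>X. 0 \<le> \<mu> X" using mn by (simp add: matrix_norm_def)
  show "\<exists>M. \<forall>r\<ge>1. \<mu> (C r) \<le> M"
  proof (intro exI allI impI)
    fix r :: nat assume r: "1 \<le> r"
    obtain ks where ks: "distinct ks" "set ks = {p+1..p+r}"
      and C: "C r = ordered_prod (\<lambda>i. A (\<sigma> i)) ks"
      using gp r unfolding is_general_product_def by blast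
    have "\<mu> (C r) \<le> \<mu> (mat 1) * (\<Prod>k\<leftarrow>ks. m (\<sigma> k))"
      using op_bound[OF mn, of "\<lambda>i. A (\<sigma> i)" ks] C by (simp add: m_def)
    also have "(\<Prod>k\<leftarrow>ks. m (\<sigma> k)) = (\<Prod>k\<in>{p+1..p+r}. m (\<sigma> k))"
      using ks by (metis prod.distinct_set_conv_list)
    also have "\<dots> \<le> exp (\<Sum>k\<in>{p+1..p+r}. m (\<sigma> k) - 1)"
      by (rule prod_exp_bound) (auto simp: m_def)
    also have "(\<Sum>k\<in>{p+1..p+r}. m (\<sigma> k) - 1) = (\<Sum>j\<in>\<sigma> ` {p+1..p+r}. m j - 1)"
    proof -
      have "inj_on \<sigma> {p+1..p+r}"
        using bij_betw_imp_inj_on[OF bij] by (rule inj_on_subset) auto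
      then show ?thesis by (simp add: sum.reindex)
    qed
    also have "\<dots> \<le> S"
      unfolding S_def
    proof (rule sum_le_suminf_shift)
      show "summable (\<lambda>i. m (Suc i) - 1)" using sm by (simp add: m_def)
      show "\<And>i. 0 \<le> m i - 1" by (simp add: m_def)
      show "finite (\<sigma> ` {p+1..p+r})" by simp
      show "\<sigma> ` {p+1..p+r} \<subseteq> {1..}" using bij_betw_imp_surj_on[OF bij] by auto
    qed
    finally show "\<mu> (C r) \<le> \<mu> (mat 1) * exp S"
      using nn[of "mat 1"] by (simp add: mult_left_mono)
  qed
qed

theorem proposition3p1:
  shows "(\<forall>(\<mu>::real^'n^'n \<Rightarrow> real) (A::nat \<Rightarrow> real^'n^'n).
            matrix_norm \<mu> \<longrightarrow> summable (\<lambda>i. max (\<mu> (A (Suc i))) 1 - 1) \<longrightarrow>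
            general_products_bounded \<mu> A)
       \<and> (\<forall>(\<mu>::complex^'n^'n \<Rightarrow> real) (A::nat \<Rightarrow> complex^'n^'n).
            matrix_norm \<mu> \<longrightarrow> summable (\<lambda>i. max (\<mu> (A (Suc i))) 1 - 1) \<longrightarrow>
            general_products_bounded \<mu> A)"
  by (intro conjI allI impI; erule general; assumption)

end
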